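(* Let $n\ge 1$, let $c\in\mathbb{R}^n$ with $c_1\ge c_2\ge\cdots\ge c_n\ge 0$, and let $u\in\mathbb{R}^n$ with $u_i>0$ for all $i$. Let $f(x)=\frac12\left(\sum_{i=1}^n x_i\right)^2-\sum_{i=1}^n c_ix_i$. For $k=0,1,\dots,n$ let $U_k=\sum_{i=1}^k u_i$ (so $U_0=0$) and let $x^{(k)}\in\mathbb{R}^n$ be the vector with $x^{(k)}_i=u_i$ for $i\le k$ and $x^{(k)}_i=0$ for $i>k$ (so $x^{(0)}=0$). For $k=1,\dots,n$ let \[ G_k=\tfrac12\left(U_k+U_{k-1}\right)-c_k=U_{k-1}+\tfrac12u_k-c_k . \] Then: (i) If $\bar n$ is the smallest index in $\{1,\dots,n\}$ such that $G_{\bar n}\ge 0$, then $\min_{i=0,1,\dots,n} f(x^{(i)})=f(x^{(\bar n-1)})$. (ii) If $G_k<0$ for all $k=1,\dots,n$, then $\min_{i=0,1,\dots,n} f(x^{(i)})=f(x^{(n)})$.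
   Context: The vectors $x^{(k)}$ fill the coordinates $1,\dots,k$ to their upper bounds $u_i$ and leave the rest at $0$. *)

theory Defs
  imports Complex_Main
begin

text \<open>Vectors in R^n are represented as functions nat => real, indexed by 1..n.\<close>

definition fobj :: "nat \<Rightarrow> (nat \<Rightarrow> real) \<Rightarrow> (nat \<Rightarrow> real) \<Rightarrow> real" where
  "fobj n c x = (1/2) * (\<Sum>i=1..n. x i)^2 - (\<Sum>i=1..n. c i * x i)"

definition xvec :: "(nat \<Rightarrow> real) \<Rightarrow> nat \<Rightarrow> (nat \<Rightarrow> real)" where
  "xvec u k = (\<lambda>i. if i \<le> k then u i else 0)"

definition Usum :: "(nat \<Rightarrow> real) \<Rightarrow> nat \<Rightarrow> real" where
  "Usum u k = (\<Sum>i=1..k. u i)"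

definition Gval :: "(nat \<Rightarrow> real) \<Rightarrow> (nat \<Rightarrow> real) \<Rightarrow> nat \<Rightarrow> real" where
  "Gval c u k = (1/2) * (Usum u k + Usum u (k - 1)) - c k"

end

theory Submission
  imports Defs
begin

lemma sum_restr:
  fixes g :: "nat \<Rightarrow> real"
  assumes "k \<le> n"
  shows "(\<Sum>i=1..n. if i \<le> k then g i else 0) = (\<Sum>i=1..k. g i)"
proof -
  have "(\<Sum>i=1..n. if i \<le> k then g i else 0) = (\<Sum>i=1..n. if i \<in> {..k} then g i else 0)" by simp
  also have "\<dots> = sum g ({1..n} \<inter> {..k})" by (rule sum.inter_restrict[symmetric]) simp
  also have "{1..n} \<inter> {..k} = {1..k}" using assms by auto
  finally show ?thesis by simp
qed

lemma F_form:
  assumes "k \<le> n"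
  shows "fobj n c (xvec u k) = (1/2) * (Usum u k)^2 - (\<Sum>i=1..k. c i * u i)"
proof -
  have "(\<Sum>i=1..n. c i * xvec u k i) = (\<Sum>i=1..n. if i \<le> k then c i * u i else 0)"
    by (rule sum.cong) (auto simp: xvec_def)
  then show ?thesis using sum_restr[OF assms, of u] sum_restr[OF assms, of "\<lambda>i. c i * u i"]
    by (simp add: fobj_def Usum_def xvec_def)
qed

lemma F_diff:
  assumes "1 \<le> k" "k \<le> n"
  shows "fobj n c (xvec u k) - fobj n c (xvec u (k-1)) = u k * Gval c u k"
proof -
  obtain m where m: "k = Suc m" using assms by (cases k) auto
  have U: "Usum u (Suc m) = Usum u m + u (Suc m)" by (simp add: Usum_def)
  have S: "(\<Sum>i=1..Suc m. c i * u i) = (\<Sum>i=1..m. c i * u i) + c (Suc m) * u (Suc m)" by simp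
  show ?thesis using assms
    by (simp add: F_form m U S Gval_def power2_eq_square algebra_simps)
qed

lemma chain_le:
  fixes F :: "nat \<Rightarrow> real"
  shows "(\<And>m. a < m \<Longrightarrow> m \<le> b \<Longrightarrow> F m \<le> F (m-1)) \<Longrightarrow> a \<le> b \<Longrightarrow> F b \<le> F a"
proof (induction b)
  case 0 then show ?case by simp
next
  case (Suc b)
  show ?case
  proof (cases "a = Suc b")
    case False
    then have "F b \<le> F a" using Suc by auto
    moreover have "F (Suc b) \<le> F b" using Suc.prems(1)[of "Suc b"] Suc.prems(2) False by auto
    ultimately show ?thesis by linarith
  qed simp
qed

lemma chain_ge:
  fixes F :: "nat \<Rightarrow> real"
  shows "(\<And>m. a < m \<Longrightarrow> m \<le> b \<Longrightarrow> F m \<ge> F (m-1)) \<Longrightarrow> a \<le> b \<Longrightarrow> F b \<ge> F a"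
  using chain_le[of a b "\<lambda>m. - F m"] by force

theorem lemma1:
  fixes n :: nat and c u :: "nat \<Rightarrow> real"
  assumes "n \<ge> 1"
    and "\<And>i j. 1 \<le> i \<Longrightarrow> i \<le> j \<Longrightarrow> j \<le> n \<Longrightarrow> c j \<le> c i"
    and "c n \<ge> 0"
    and "\<And>i. 1 \<le> i \<Longrightarrow> i \<le> n \<Longrightarrow> u i > 0"
  shows "(\<forall>nb. nb \<in> {1..n} \<and> Gval c u nb \<ge> 0 \<and> (\<forall>k\<in>{1..<nb}. Gval c u k < 0)
            \<longrightarrow> Min ((\<lambda>i. fobj n c (xvec u i)) ` {0..n}) = fobj n c (xvec u (nb - 1)))
       \<and> ((\<forall>k\<in>{1..n}. Gval c u k < 0)
            \<longrightarrow> Min ((\<lambda>i. fobj n c (xvec u i)) ` {0..n}) = fobj n c (xvec u n))"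
proof -
  define F where "F = (\<lambda>i. fobj n c (xvec u i))"
  have Gstep: "Gval c u k \<le> Gval c u (Suc k)" if "1 \<le> k" "Suc k \<le> n" for k
  proof -
    have "c (Suc k) \<le> c k" using assms(2)[of k "Suc k"] that by simp
    moreover have "u k > 0" "u (Suc k) > 0" using assms(4) that by auto
    moreover have "Usum u (Suc k) = Usum u k + u (Suc k)" by (simp add: Usum_def)
    moreover have "Usum u k = Usum u (k-1) + u k" using that
      by (cases k) (auto simp: Usum_def)
    ultimately show ?thesis by (simp add: Gval_def field_simps)
  qed
  have Gmono: "Gval c u j \<le> Gval c u k" if "1 \<le> j" "j \<le> k" "k \<le> n" for j k
    using that
  proof (induction k)
    case 0 then show ?case by simp
  next
    case (Suc k)
    show ?case
    proof (cases "j = Suc k")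
      case False
      then have "Gval c u j \<le> Gval c u k" using Suc by auto
      moreover have "Gval c u k \<le> Gval c u (Suc k)" using Gstep[of k] Suc.prems False by auto
      ultimately show ?thesis by linarith
    qed simp
  qed
  have down: "F m \<le> F (m-1)" if "1 \<le> m" "m \<le> n" "Gval c u m \<le> 0" for m
    using F_diff[OF that(1,2), of c u] assms(4)[OF that(1,2)] that(3)
    by (simp add: F_def mult_pos_neg) (smt (verit) mult_nonneg_nonpos)
  have up: "F m \<ge> F (m-1)" if "1 \<le> m" "m \<le> n" "Gval c u m \<ge> 0" for m
    using F_diff[OF that(1,2), of c u] assms(4)[OF that(1,2)] that(3)
    by (simp add: F_def) (smt (verit) mult_nonneg_nonneg)
  have fin: "finite (F ` {0..n})" by simp
  have P1: "Min (F ` {0..n}) = F (nb - 1)"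
    if nb: "nb \<in> {1..n}" "Gval c u nb \<ge> 0" "\<forall>k\<in>{1..<nb}. Gval c u k < 0" for nb
  proof (rule Min_eqI[OF fin])
    show "F (nb - 1) \<in> F ` {0..n}" using nb by auto
    fix y assume "y \<in> F ` {0..n}"
    then obtain k where k: "k \<le> n" "y = F k" by auto
    show "F (nb - 1) \<le> y"
    proof (cases "k \<le> nb - 1")
      case True
      have "F (nb - 1) \<le> F k"
      proof (rule chain_le[OF _ True])
        fix m assume "k < m" "m \<le> nb - 1"
        then show "F m \<le> F (m - 1)" using nb
          by (intro down) (auto intro: less_imp_le)
      qed
      then show ?thesis using k by simp
    next
      case False
      have "F (nb - 1) \<le> F k"
      proof (rule chain_ge)
        fix m assume "nb - 1 < m" "m \<le> k"
        moreover have "nb \<le> m" using \<open>nb - 1 < m\<close> nb(1) by auto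
        ultimately show "F (m - 1) \<le> F m" using nb k Gmono[of nb m]
          by (intro up) auto
      qed (use False in auto)
      then show ?thesis using k by simp
    qed
  qed
  have P2: "Min (F ` {0..n}) = F n" if G: "\<forall>k\<in>{1..n}. Gval c u k < 0"
  proof (rule Min_eqI[OF fin])
    show "F n \<in> F ` {0..n}" by auto
    fix y assume "y \<in> F ` {0..n}"
    then obtain k where k: "k \<le> n" "y = F k" by auto
    have "F n \<le> F k"
    proof (rule chain_le[OF _ k(1)])
      fix m assume "k < m" "m \<le> n"
      then show "F m \<le> F (m - 1)" using G
        by (intro down) (auto intro: less_imp_le)
    qed
    then show "F n \<le> y" using k by simp
  qed
  show ?thesis using P1 P2 unfolding F_def by blast
qed

end
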